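(* Let $(a_n)_{n\ge1}$ be an increasing sequence of positive integers with positive lower asymptotic density $\underline{\delta}=\liminf_{N\to\infty}\frac1N\#\{n\ge1:a_n\le N\}$, and let $x=(x_1,\dots,x_d)\in\mathbb{R}^d$ be such that $1,x_1,\dots,x_d$ are linearly independent over $\mathbb{Q}$. Then for every nonempty dyadic cube $\lambda\subseteq[0,1)^d$, $\liminf_{j\to\infty}2^{-dj}\#\mathrm{M}((\{a_nx\})_{n\ge1};\lambda,j)\le480^d\left(\kappa(x)/\underline{\delta}\right)^{d/(d+1)}$.
   Context: $\{z\}$ is the coordinatewise fractional part. For $z\in\mathbb{R}^d$, $\|z\|=\inf_{p\in\mathbb{Z}^d}|z-p|_\infty$ (supremum norm), and $\kappa(x)=\liminf_{q\to\infty}q^{1/d}\|qx\|$. A dyadic cube is $\lambda=2^{-j}(k+[0,1)^d)$, $j\in\mathbb{Z}$, $k\in\mathbb{Z}^d$, with generation $\langle\lambda\rangle=j$. For a nonempty dyadic cube $\lambda$, an integer $j\ge0$ and a sequence $(x_n)_{n\ge1}$, $\mathrm{M}((x_n)_{n\ge1};\lambda,j)$ is the set of dyadic cubes $\lambda'\subseteq\lambda$ of generation $\langle\lambda\rangle+j$ such that $x_n\in\lambda'$ for some $n\le2^{d\langle\lambda'\rangle}$. *)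

theory Defs
  imports "HOL-Analysis.Analysis"
begin

definition supnorm :: "real^'d \<Rightarrow> real" where
  "supnorm z = Max (range (\<lambda>i. \<bar>z $ i\<bar>))"

definition lattice_dist :: "real^'d \<Rightarrow> real" where
  "lattice_dist z = Inf {supnorm (z - p) | p. \<forall>i. p $ i \<in> \<int>}"

definition kappa :: "real^'d \<Rightarrow> ereal" where
  "kappa x = Liminf sequentially
     (\<lambda>q::nat. ereal (real q powr (1 / real CARD('d)) * lattice_dist (real q *\<^sub>R x)))"

definition frac_vec :: "real^'d \<Rightarrow> real^'d" where
  "frac_vec z = (\<chi> i. frac (z $ i))"

definition dyadic_cube :: "int \<Rightarrow> ('d \<Rightarrow> int) \<Rightarrow> (real^'d) set" where
  "dyadic_cube j k = {y. \<forall>i. 2 powi j * y $ i - of_int (k i) \<in> {0..<1}}"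

definition is_dyadic_cube :: "(real^'d) set \<Rightarrow> bool" where
  "is_dyadic_cube L \<longleftrightarrow> (\<exists>j k. L = dyadic_cube j k)"

definition generation :: "(real^'d) set \<Rightarrow> int" where
  "generation L = (THE j. \<exists>k. L = dyadic_cube j k)"

definition dyadicM :: "(nat \<Rightarrow> real^'d) \<Rightarrow> (real^'d) set \<Rightarrow> nat \<Rightarrow> (real^'d) set set" where
  "dyadicM xs L j = {L'. is_dyadic_cube L' \<and> L' \<subseteq> L \<and>
      generation L' = generation L + int j \<and>
      (\<exists>n. 1 \<le> n \<and> real n \<le> 2 powi (int CARD('d) * generation L') \<and> xs n \<in> L')}"

end

theory Submission
  imports Defs
begin


lemma kron:
  fixes x :: "real^'d" and \<beta> :: "real^'d"
  assumes indep: "\<forall>(c0::rat) (c::'d \<Rightarrow> rat).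
                  of_rat c0 + (\<Sum>i\<in>UNIV. of_rat (c i) * x $ i) = 0 \<longrightarrow> c0 = 0 \<and> (\<forall>i. c i = 0)"
  and eps: "\<epsilon> > 0"
  shows "\<exists>t::int. \<forall>i. \<exists>m::int. \<bar>of_int t * x$i - of_int m - \<beta>$i\<bar> < \<epsilon>"
proof -
  define n where "n = CARD('d)"
  obtain h where h: "bij_betw h {0..<n} (UNIV::'d set)"
    using ex_bij_betw_nat_finite[of "UNIV::'d set"] unfolding n_def by auto
  define hi where "hi = inv_into {0..<n} h"
  have hi1: "h (hi i) = i" for i using h unfolding hi_def
    by (simp add: bij_betw_inv_into_right)
  have hi2: "j < n \<Longrightarrow> hi (h j) = j" for j using h unfolding hi_def
    by (simp add: bij_betw_inv_into_left)
  have hi3: "hi i < n" for i using h unfolding hi_def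
    by (metis atLeastLessThan_iff bij_betw_def inv_into_into iso_tuple_UNIV_I)
  define \<theta> where "\<theta> j = (if j < n then x$(h j) else 1)" for j
  define \<alpha> where "\<alpha> j = (if j < n then \<beta>$(h j) else 0)" for j
  have xinj: "x$i \<noteq> x$j" if "i \<noteq> j" for i j
  proof
    assume e: "x$i = x$j"
    define c where "c = (\<lambda>k. if k = i then (1::rat) else if k = j then -1 else 0)"
    have "(\<Sum>k\<in>UNIV. of_rat (c k) * x $ k) = x$i - x$j"
    proof -
      have "(\<Sum>k\<in>UNIV. of_rat (c k) * x $ k) = (\<Sum>k\<in>{i,j}. of_rat (c k) * x $ k)"
        by (rule sum.mono_neutral_right) (auto simp: c_def)
      also have "\<dots> = x$i - x$j" using that by (simp add: c_def)
      finally show ?thesis .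
    qed
    then have "of_rat 0 + (\<Sum>k\<in>UNIV. of_rat (c k) * x $ k) = 0" using e by simp
    then have "c i = 0" using indep by blast
    then show False by (simp add: c_def)
  qed
  have xne1: "x$i \<noteq> 1" for i
  proof
    assume e: "x$i = 1"
    define c where "c = (\<lambda>k. if k = i then (1::rat) else 0)"
    have "(\<Sum>k\<in>UNIV. of_rat (c k) * x $ k) = x$i"
    proof -
      have "(\<Sum>k\<in>UNIV. of_rat (c k) * x $ k) = (\<Sum>k\<in>{i}. of_rat (c k) * x $ k)"
        by (rule sum.mono_neutral_right) (auto simp: c_def)
      also have "\<dots> = x$i" by (simp add: c_def)
      finally show ?thesis .
    qed
    then have "of_rat (-1) + (\<Sum>k\<in>UNIV. of_rat (c k) * x $ k) = 0" using e by simp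
    then show False using indep by fastforce
  qed
  have inj: "inj_on \<theta> {..n}"
  proof (rule inj_onI)
    fix a b assume a: "a \<in> {..n}" and b: "b \<in> {..n}" and e: "\<theta> a = \<theta> b"
    show "a = b"
    proof (cases "a < n"; cases "b < n")
      assume "a < n" "b < n"
      then have "h a = h b" using e xinj unfolding \<theta>_def by auto
      then show ?thesis using hi2 \<open>a<n\<close> \<open>b<n\<close> by metis
    qed (use a b e xne1 in \<open>auto simp: \<theta>_def split: if_splits\<close>)
  qed
  interpret M: Modules.module "(\<lambda>r. (*) (real_of_int r))"
    by (simp add: Modules.module.intro distrib_left mult.commute)
  have indp: "M.independent (\<theta> ` {..n})"
  proof
    assume "M.dependent (\<theta> ` {..n})"
    then obtain t u where t: "finite t" "t \<subseteq> \<theta> ` {..n}"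
        and s: "(\<Sum>v\<in>t. real_of_int (u v) * v) = 0" and v0: "\<exists>v\<in>t. u v \<noteq> 0"
      unfolding M.dependent_explicit by blast
    define S where "S = {j\<in>{..n}. \<theta> j \<in> t}"
    have tS: "t = \<theta> ` S" using t unfolding S_def by auto
    have injS: "inj_on \<theta> S" using inj by (rule inj_on_subset) (auto simp: S_def)
    define w where "w j = (if j \<in> S then u (\<theta> j) else 0)" for j
    have "(\<Sum>j\<in>S. real_of_int (u (\<theta> j)) * \<theta> j) = 0"
      using s unfolding tS sum.reindex[OF injS] by simp
    moreover have "(\<Sum>j\<in>S. real_of_int (u (\<theta> j)) * \<theta> j) = (\<Sum>j\<in>{..n}. real_of_int (w j) * \<theta> j)"
      by (rule sum.mono_neutral_cong_left) (auto simp: S_def w_def)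
    ultimately have s2: "(\<Sum>j\<in>{..n}. real_of_int (w j) * \<theta> j) = 0" by simp
    have "(\<Sum>j\<in>{..n}. real_of_int (w j) * \<theta> j) = real_of_int (w n) + (\<Sum>j\<in>{0..<n}. real_of_int (w j) * \<theta> j)"
    proof -
      have "{..n} = insert n {0..<n}" by auto
      then show ?thesis by (simp add: \<theta>_def)
    qed
    also have "(\<Sum>j\<in>{0..<n}. real_of_int (w j) * \<theta> j) = (\<Sum>j\<in>{0..<n}. real_of_int (w (hi (h j))) * x$(h j))"
      by (rule sum.cong) (auto simp: \<theta>_def hi2)
    also have "\<dots> = (\<Sum>i\<in>UNIV. real_of_int (w (hi i)) * x$i)"
      using sum.reindex_bij_betw[OF h, of "\<lambda>i. real_of_int (w (hi i)) * x$i"] by simp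
    finally have "of_rat (of_int (w n)) + (\<Sum>i\<in>UNIV. of_rat (of_int (w (hi i))) * x$i) = 0"
      using s2 by simp
    then have z: "(of_int (w n)::rat) = 0 \<and> (\<forall>i. (of_int (w (hi i))::rat) = 0)"
      using indep[rule_format, of "of_int (w n)" "\<lambda>i. of_int (w (hi i))"] by blast
    have "w j = 0" if "j \<le> n" for j
    proof (cases "j < n")
      case True then show ?thesis using z hi2[OF True] by (metis of_int_eq_0_iff)
    next
      case False then show ?thesis using z that by (metis le_less of_int_eq_0_iff)
    qed
    moreover obtain v where "v \<in> t" "u v \<noteq> 0" using v0 by blast
    then obtain j where "j \<in> S" "v = \<theta> j" using tS by blast
    moreover have "j \<le> n" using \<open>j \<in> S\<close> by (simp add: S_def)
    ultimately have "w j = 0" by blast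
    then show False using \<open>u v \<noteq> 0\<close> \<open>j \<in> S\<close> \<open>v = \<theta> j\<close> by (simp add: w_def)
  qed
  have "\<theta> n = 1" by (simp add: \<theta>_def)
  obtain k m where km: "\<And>i. i < n \<Longrightarrow> \<bar>of_int k * \<theta> i - of_int (m i) - \<alpha> i\<bar> < \<epsilon>"
    using Kronecker_thm_2[OF indp inj \<open>\<theta> n = 1\<close> eps, of \<alpha>] by blast
  show ?thesis
  proof (intro exI allI)
    fix i
    have "\<bar>of_int k * \<theta> (hi i) - of_int (m (hi i)) - \<alpha> (hi i)\<bar> < \<epsilon>" using km hi3 by blast
    then show "\<bar>of_int k * x$i - of_int (m (hi i)) - \<beta>$i\<bar> < \<epsilon>"
      using hi3[of i] by (simp add: \<theta>_def \<alpha>_def hi1)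
  qed
qed



lemma Ints_01_False: "(X::real) \<in> \<int> \<Longrightarrow> 0 < X \<Longrightarrow> X < 1 \<Longrightarrow> False"
  by (auto elim!: Ints_cases)

lemma Ints_m10_False: "(X::real) \<in> \<int> \<Longrightarrow> -1 < X \<Longrightarrow> X < 0 \<Longrightarrow> False"
  by (auto elim!: Ints_cases)


lemma packing:
  fixes x c :: "real^'d" and s w :: real and G :: nat
  assumes indep: "\<forall>(c0::rat) (c::'d \<Rightarrow> rat).
                  of_rat c0 + (\<Sum>i\<in>UNIV. of_rat (c i) * x $ i) = 0 \<longrightarrow> c0 = 0 \<and> (\<forall>i. c i = 0)"
    and G: "G \<ge> 1" and s: "s = 1 / 2^G" and w: "w = s/4"
  shows "\<exists>T::nat. \<forall>q. card {r::nat. r < q \<and> (\<forall>i. frac (real r * x$i - c$i + w) < s + 2*w)}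
            * (2^(G-1))^CARD('d) \<le> q + T"
proof -
  define m :: nat where "m = 2^(G-1)"
  have sm: "2 * s * real m = 1"
  proof -
    have "(2::real) ^ G = 2 * 2^(G-1)" using G by (cases G) auto
    then show ?thesis unfolding s m_def by simp
  qed
  have spos: "s > 0" using s by simp
  define \<sigma> where "\<sigma> = s + 2*w"
  define Gr :: "('d \<Rightarrow> nat) set" where "Gr = PiE UNIV (\<lambda>_. {..<m})"
  have finGr: "finite Gr" unfolding Gr_def by (simp add: finite_PiE)
  have cardGr: "card Gr = m ^ CARD('d)" unfolding Gr_def by (simp add: card_PiE)
  have "\<forall>k::'d\<Rightarrow>nat. \<exists>t::int. \<forall>i. \<exists>M::int. \<bar>of_int t * x$i - of_int M - 2 * s * real (k i)\<bar> < s/4"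
  proof
    fix k :: "'d\<Rightarrow>nat"
    show "\<exists>t::int. \<forall>i. \<exists>M::int. \<bar>of_int t * x$i - of_int M - 2 * s * real (k i)\<bar> < s/4"
      using kron[OF indep, of "s/4" "vec_lambda (\<lambda>j. 2 * s * real (k j))"] spos by simp
  qed
  then have "\<exists>t. \<forall>k::'d\<Rightarrow>nat. \<forall>i. \<exists>M::int. \<bar>of_int (t k) * x$i - of_int M - 2 * s * real (k i)\<bar> < s/4"
    by (rule choice)
  then obtain t :: "('d\<Rightarrow>nat) \<Rightarrow> int" where t:
    "\<And>k i. \<exists>M::int. \<bar>of_int (t k) * x$i - of_int M - 2 * s * real (k i)\<bar> < s/4"
    by blast
  define V where "V k n \<longleftrightarrow> (\<forall>i. frac (of_int n * x$i - of_int (t k) * x$i - c$i + w) < \<sigma>)" for k and n :: int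
  have disj: "k = l" if k: "k \<in> Gr" and l: "l \<in> Gr" and Vk: "V k n" and Vl: "V l n" for k l n
  proof (rule ccontr)
    assume "k \<noteq> l"
    then obtain i where ne: "k i \<noteq> l i" by blast
    have kl: "k i < m" "l i < m" using k l unfolding Gr_def by auto
    define A where "A = of_int n * x$i - c$i + w"
    define a where "a = frac (A - of_int (t k) * x$i)"
    define b where "b = frac (A - of_int (t l) * x$i)"
    have "a = frac (of_int n * x$i - of_int (t k) * x$i - c$i + w)"
      unfolding a_def A_def by (rule arg_cong[where f=frac]) (simp add: algebra_simps)
    then have a: "0 \<le> a" "a < \<sigma>" using Vk unfolding V_def by (auto simp: frac_ge_0)
    have "b = frac (of_int n * x$i - of_int (t l) * x$i - c$i + w)"
      unfolding b_def A_def by (rule arg_cong[where f=frac]) (simp add: algebra_simps)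
    then have b: "0 \<le> b" "b < \<sigma>" using Vl unfolding V_def by (auto simp: frac_ge_0)
    have ai: "A - of_int (t k) * x$i - a \<in> \<int>" unfolding a_def by (simp add: frac_def)
    have bi: "A - of_int (t l) * x$i - b \<in> \<int>" unfolding b_def by (simp add: frac_def)
    obtain Mk::int where Mk: "\<bar>of_int (t k) * x$i - of_int Mk - 2 * s * real (k i)\<bar> < s/4" using t by blast
    obtain Ml::int where Ml: "\<bar>of_int (t l) * x$i - of_int Ml - 2 * s * real (l i)\<bar> < s/4" using t by blast
    define E1 where "E1 = of_int (t k) * x$i - of_int Mk - 2 * s * real (k i)"
    define E2 where "E2 = of_int (t l) * x$i - of_int Ml - 2 * s * real (l i)"
    define D where "D = 2 * s * (real (k i) - real (l i))"
    have E: "-s/4 < E1" "E1 < s/4" "-s/4 < E2" "E2 < s/4" using Mk Ml unfolding E1_def E2_def by linarith+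
    define X where "X = (A - of_int (t l) * x$i - b) - (A - of_int (t k) * x$i - a) - of_int Mk + of_int Ml"
    have Xi: "X \<in> \<int>" unfolding X_def by (rule Ints_add[OF Ints_diff[OF Ints_diff[OF bi ai]]]) auto
    have Xe: "X = E1 - E2 + a - b + D"
      unfolding X_def E1_def E2_def D_def by (simp add: algebra_simps)
    have sig: "\<sigma> = 3 * s / 2" unfolding \<sigma>_def w by simp
    show False
    proof (cases "k i > l i")
      case True
      have "2 * s * (real (k i) - real (l i)) \<ge> 2 * s * 1" using True spos by (intro mult_left_mono) auto
      moreover have "2 * s * (real (k i) - real (l i)) \<le> 2 * s * (real m - 1)" using kl spos by (intro mult_left_mono) auto
      ultimately have "D \<ge> 2 * s" "D \<le> 1 - 2 * s" using sm unfolding D_def by (simp_all add: algebra_simps)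
      then have "0 < X" "X < 1" using Xe E a b sig by linarith+
      then show False using Xi Ints_01_False by blast
    next
      case False
      then have F: "l i > k i" using ne by auto
      have "2 * s * (real (l i) - real (k i)) \<ge> 2 * s * 1" using F spos by (intro mult_left_mono) auto
      moreover have "2 * s * (real (l i) - real (k i)) \<le> 2 * s * (real m - 1)" using kl spos by (intro mult_left_mono) auto
      ultimately have "-D \<ge> 2 * s" "-D \<le> 1 - 2 * s" using sm unfolding D_def by (simp_all add: algebra_simps)
      then have "-1 < X" "X < 0" using Xe E a b sig by linarith+
      then show False using Xi Ints_m10_False by blast
    qed
  qed
  define T0 :: int where "T0 = Max ((\<lambda>k. \<bar>t k\<bar>) ` Gr)"
  have T0: "\<bar>t k\<bar> \<le> T0" if "k \<in> Gr" for k unfolding T0_def using finGr that by auto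
  show ?thesis
  proof (intro exI allI)
    fix q :: nat
    define R where "R = {r::nat. r < q \<and> (\<forall>i. frac (real r * x$i - c$i + w) < s + 2*w)}"
    define \<Phi> where "\<Phi> = (\<lambda>(k, r::nat). int r + t k)"
    have inj: "inj_on \<Phi> (Gr \<times> R)"
    proof (rule inj_onI, clarify)
      fix k r l r' assume kr: "k \<in> Gr" "r \<in> R" "l \<in> Gr" "r' \<in> R" and e: "\<Phi> (k, r) = \<Phi> (l, r')"
      have eq: "of_int (int r + t k') * x$i - of_int (t k') * x$i - c$i + w = real r * x$i - c$i + w" for r k' i
        by (simp add: algebra_simps)
      have "V k (int r + t k)" using kr unfolding R_def V_def \<sigma>_def eq by simp
      moreover have "V l (int r' + t l)" using kr unfolding R_def V_def \<sigma>_def eq by simp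
      ultimately have "k = l" using e disj kr unfolding \<Phi>_def by auto
      then show "k = l \<and> r = r'" using e unfolding \<Phi>_def by auto
    qed
    have sub: "\<Phi> ` (Gr \<times> R) \<subseteq> {-T0..<int q + T0}"
    proof clarify
      fix k r assume "k \<in> Gr" "r \<in> R"
      then show "\<Phi> (k, r) \<in> {-T0..<int q + T0}" using T0[of k] unfolding \<Phi>_def R_def by auto
    qed
    have "card (Gr \<times> R) \<le> card {-T0..<int q + T0}"
      by (rule card_inj_on_le[OF inj sub]) simp
    then have "card R * card Gr \<le> nat (int q + 2*T0)" by (simp add: card_cartesian_product mult.commute add.commute)
    moreover have "T0 \<ge> 0"
    proof -
      have "(\<lambda>_. 0) \<in> Gr" unfolding Gr_def m_def by auto
      then show ?thesis using T0[of "\<lambda>_. 0"] by linarith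
    qed
    ultimately show "card R * (2^(G-1))^CARD('d) \<le> q + nat (2*T0)"
      unfolding cardGr m_def by linarith
  qed
qed



lemma cube_mem: "y \<in> dyadic_cube j k \<longleftrightarrow> (\<forall>i. of_int (k i) \<le> 2 powi j * y$i \<and> 2 powi j * y$i < of_int (k i) + 1)"
proof -
  have *: "\<And>a b::real. (a - b \<in> {0..<1}) = (b \<le> a \<and> a < b + 1)" by auto
  show ?thesis unfolding dyadic_cube_def mem_Collect_eq *  by (simp only:)
qed

lemma cube_idx: "y \<in> dyadic_cube j k \<Longrightarrow> k = (\<lambda>i. \<lfloor>2 powi j * y$i\<rfloor>)"
  unfolding cube_mem by (auto intro!: ext floor_unique[symmetric])

lemma corner_mem: "(\<chi> i. of_int (k i) / 2 powi j) \<in> dyadic_cube j k"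
  unfolding cube_mem by simp

lemma cube_eq_pow: 
  assumes e: "dyadic_cube j k = dyadic_cube j' k'" and lt: "1 / (2::real) powi j < 1 / 2 powi j'"
  shows False
proof -
  define P where "P = (2::real) powi j"
  define P' where "P' = (2::real) powi j'"
  have P: "P > 0" "P' > 0" unfolding P_def P'_def by auto
  define a where "a = (\<chi> i. of_int (k i) / P)"
  define a' where "a' = (\<chi> i. of_int (k' i) / P')"
  have aC: "a \<in> dyadic_cube j k" unfolding a_def P_def by (rule corner_mem)
  have a'C: "a' \<in> dyadic_cube j k" unfolding a'_def P'_def e by (rule corner_mem)
  have ai: "a$i = a'$i" for i
  proof -
    have "of_int (k i) \<le> P * a'$i" using a'C unfolding cube_mem P_def by blast
    then have 1: "a$i \<le> a'$i" using P unfolding a_def by (simp add: field_simps)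
    have "of_int (k' i) \<le> P' * a$i" using aC unfolding e cube_mem P'_def by blast
    then have 2: "a'$i \<le> a$i" using P unfolding a'_def by (simp add: field_simps)
    show ?thesis using 1 2 by simp
  qed
  define b where "b = (\<chi> i. a$i + 1/P)"
  have "b \<notin> dyadic_cube j k" unfolding cube_mem b_def a_def P_def[symmetric] using P
    by (simp add: field_simps)
  moreover have "b \<in> dyadic_cube j' k'" unfolding cube_mem P'_def[symmetric]
  proof
    fix i
    have "P' * b$i = of_int (k' i) + P'/P" unfolding b_def using ai[of i] P unfolding a'_def
      by (simp add: field_simps)
    moreover have "P'/P < 1" using lt P unfolding P_def[symmetric] P'_def[symmetric] by (simp add: field_simps)
    moreover have "P'/P \<ge> 0" using P by simp
    ultimately show "of_int (k' i) \<le> P' * b $ i \<and> P' * b $ i < of_int (k' i) + 1" by simp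
  qed
  ultimately show False using e by simp
qed

lemma cube_eq_gen: "dyadic_cube j k = dyadic_cube j' k' \<Longrightarrow> j = j'"
proof (rule ccontr)
  assume e: "dyadic_cube j k = dyadic_cube j' k'" and ne: "j \<noteq> j'"
  show False
  proof (cases "j < j'")
    case True
    then have "(2::real) powi j < 2 powi j'" by (rule power_int_strict_increasing) simp
    then have "1 / 2 powi j' < 1 / (2::real) powi j" by (simp add: frac_less2)
    then show False using cube_eq_pow[OF e[symmetric]] by blast
  next
    case False
    then have "j' < j" using ne by simp
    then have "(2::real) powi j' < 2 powi j" by (rule power_int_strict_increasing) simp
    then have "1 / 2 powi j < 1 / (2::real) powi j'" by (simp add: frac_less2)
    then show False using cube_eq_pow[OF e] by blast
  qed
qed

lemma generation_cube: "generation (dyadic_cube j k) = j"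
  unfolding generation_def
  by (rule the_equality) (auto dest: cube_eq_gen)

lemma gen_nonneg:
  fixes k :: "'d::finite \<Rightarrow> int"
  assumes "dyadic_cube g k \<subseteq> {y. \<forall>i. 0 \<le> y $ i \<and> y $ i < 1}"
  shows "g \<ge> 0"
proof (rule ccontr)
  assume "\<not> g \<ge> 0"
  then have "(2::real) powi g < 2 powi 0" by (intro power_int_strict_increasing) auto
  then have P: "(2::real) powi g < 1" "(2::real) powi g > 0" by auto
  define a :: "real^'d" where "a = (\<chi> i. of_int (k i) / 2 powi g)"
  define b :: "real^'d" where "b = (\<chi> i. a$i + 1)"
  have "a \<in> dyadic_cube g k" unfolding a_def by (rule corner_mem)
  moreover have "b \<in> dyadic_cube g k" unfolding cube_mem b_def a_def using P
    by (simp add: field_simps)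
  ultimately have "0 \<le> a$i" "b$i < 1" for i using assms by auto
  moreover have "b$i = a$i + 1" for i unfolding b_def by simp
  ultimately have "0 \<le> a$i" "a$i + 1 < 1" for i by auto
  then have "0 \<le> a$undefined" "a$undefined + 1 < 1" by blast+
  then show False by linarith
qed



lemma frac_shift_Ints: "m \<in> \<int> \<Longrightarrow> frac (u + m) = frac (u::real)"
  by (auto elim!: Ints_cases simp: frac_def)

lemma frac_frac_add: "frac (frac u + v) = frac (u + (v::real))"
proof -
  have "frac (frac u + v) = frac ((u + v) + of_int (- \<lfloor>u\<rfloor>))"
    by (rule arg_cong[where f=frac]) (simp add: frac_def)
  also have "\<dots> = frac (u + v)" by (rule frac_shift_Ints) simp
  finally show ?thesis .
qed

lemma idx_box:
  fixes y0 z :: real and Pi :: int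
  assumes y0: "0 \<le> y0" "y0 < 1" and P: "Pi \<ge> 1" and z: "\<bar>z\<bar> \<le> 1 / of_int Pi"
  shows "\<exists>u\<in>{0,1,2::int}. \<exists>v\<in>{-1,0,1::int}.
           \<lfloor>of_int Pi * frac (y0 + z)\<rfloor> = \<lfloor>of_int Pi * y0\<rfloor> - 1 + u - Pi * v"
proof -
  define P where "P = (of_int Pi :: real)"
  have P1: "P \<ge> 1" using P unfolding P_def by simp
  have z1: "\<bar>z\<bar> \<le> 1" using z P1 unfolding P_def[symmetric]
    by (meson divide_le_eq_1 less_le_trans order.trans zero_less_one)
  have Pz: "\<bar>P * z\<bar> \<le> 1" using z P1 unfolding P_def[symmetric]
    by (simp add: abs_mult field_simps)
  define fl where "fl = \<lfloor>y0 + z\<rfloor>"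
  have fl: "fl \<in> {-1,0,1}"
  proof -
    have "-1 \<le> y0 + z" "y0 + z < 2" using y0 z1 by linarith+
    then have "-1 \<le> fl" "fl \<le> 1" unfolding fl_def by linarith+
    then show ?thesis by auto
  qed
  have e1: "P * frac (y0 + z) = P * y0 + P * z - of_int (Pi * fl)"
    unfolding frac_def fl_def P_def by (simp add: algebra_simps)
  have e2: "\<lfloor>P * frac (y0 + z)\<rfloor> = \<lfloor>P * y0 + P * z\<rfloor> - Pi * fl"
    unfolding e1 by (rule floor_diff_of_int)
  define F where "F = \<lfloor>P * y0\<rfloor>"
  have "\<lfloor>P * y0 + P * z\<rfloor> \<ge> F - 1" "\<lfloor>P * y0 + P * z\<rfloor> \<le> F + 1"
    using Pz unfolding F_def by linarith+
  then have "\<lfloor>P * y0 + P * z\<rfloor> - F + 1 \<in> {0,1,2}" by auto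
  then show ?thesis using fl e2 unfolding P_def[symmetric] F_def[symmetric]
    by (intro bexI[of _ "\<lfloor>P * y0 + P * z\<rfloor> - F + 1"] bexI[of _ fl]) auto
qed

lemma U_cond:
  fixes y0 z c s w :: real
  assumes y0: "0 \<le> y0" "y0 < 1" and z: "\<bar>z\<bar> \<le> w" and inn: "c \<le> frac (y0 + z)" "frac (y0 + z) < c + s"
    and sw: "s + 2*w \<le> 1" "w \<ge> 0"
  shows "frac (y0 - c + w) < s + 2*w"
proof -
  define u where "u = frac (y0 + z)"
  have "y0 - c + w = ((u - c) + (w - z)) + of_int \<lfloor>y0 + z\<rfloor>"
    unfolding u_def frac_def by simp
  then have "frac (y0 - c + w) = frac (((u - c) + (w - z)) + of_int \<lfloor>y0 + z\<rfloor>)" by (rule arg_cong)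
  also have "\<dots> = frac ((u - c) + (w - z))" by (rule frac_shift_Ints) simp
  also have "\<dots> = (u - c) + (w - z)"
    using inn z sw unfolding u_def[symmetric] by (intro frac_eq_id) auto
  finally show ?thesis using inn z unfolding u_def[symmetric] by linarith
qed

lemma main_count:
  fixes x p c :: "real^'d" and a :: "nat \<Rightarrow> nat" and k0 :: "'d \<Rightarrow> int"
    and g J N q T :: nat and \<eta> s w :: real and L :: "(real^'d) set"
  assumes pack: "g \<ge> 1 \<Longrightarrow> card {r::nat. r < q \<and> (\<forall>i. frac (real r * x$i - c$i + w) < s + 2*w)}
            * (2^(g-1))^CARD('d) \<le> q + T"
    and Tq: "T \<le> q"
    and s: "s = 1 / 2^g" and w: "w = s / 4" and c: "\<And>i. c$i = of_int (k0 i) / 2^g"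
    and L: "L = dyadic_cube (int g) k0"
    and p: "\<forall>i. p$i \<in> \<int>" and e: "\<forall>i. \<bar>real q * x$i - p$i\<bar> \<le> \<eta>"
    and q: "q > 0"
    and J: "J \<ge> g + 2"
    and chain: "real N * \<eta> \<le> real q / 2^J"
    and idx: "\<forall>n. 1 \<le> n \<and> real n \<le> 2^(CARD('d)*J) \<longrightarrow> a n \<le> N"
  shows "real (card (dyadicM (\<lambda>n. frac_vec (real (a n) *\<^sub>R x)) L (J - g)))
           \<le> 2 * 9^CARD('d) * real q * 2^CARD('d) / 2^(CARD('d)*g)"
proof -
  define d where "d = CARD('d)"
  define xs where "xs = (\<lambda>n. frac_vec (real (a n) *\<^sub>R x))"
  define M where "M = dyadicM xs L (J - g)"
  define PP :: int where "PP = 2^J"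
  define box where "box r = PiE UNIV (\<lambda>i. (\<lambda>(u,v). \<lfloor>of_int PP * frac (real r * x$i)\<rfloor> - 1 + u - PP * v) ` ({0,1,2::int} \<times> {-1,0,1::int}))" for r :: nat
  define Rset where "Rset = {r. r < q \<and> (\<exists>n. 1 \<le> n \<and> real n \<le> 2^(d*J) \<and> xs n \<in> L \<and> a n mod q = r)}"
  define Kset where "Kset = (\<Union>r\<in>Rset. box r)"
  have eta0: "\<eta> \<ge> 0" using e by (meson abs_ge_zero order.trans)
  have key: "(\<lambda>i. \<lfloor>2^J * xs n $ i\<rfloor>) \<in> box (a n mod q) \<and>
        (g \<ge> 1 \<longrightarrow> (\<forall>i. frac (real (a n mod q) * x$i - c$i + w) < s + 2*w))"
    if n: "1 \<le> n" "real n \<le> 2^(d*J)" "xs n \<in> L" for n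
  proof -
    define r where "r = a n mod q"
    define mm where "mm = a n div q"
    have an: "a n = mm * q + r" unfolding r_def mm_def by simp
    have aN: "a n \<le> N" using idx n unfolding d_def by blast
    define z where "z i = real mm * (real q * x$i - p$i)" for i
    have xsn: "xs n $ i = frac (frac (real r * x$i) + z i)" for i
    proof -
      have "real (a n) * x$i = (real r * x$i + z i) + real mm * p$i"
        unfolding an z_def by (simp add: algebra_simps)
      moreover have "real mm * p$i \<in> \<int>" using p by simp
      ultimately have "frac (real (a n) * x$i) = frac (real r * x$i + z i)"
        by (simp add: frac_shift_Ints)
      then show ?thesis unfolding xs_def frac_vec_def by (simp add: frac_frac_add)
    qed
    have zb: "\<bar>z i\<bar> \<le> 1 / 2^J" for i
    proof -
      have "real mm * real q \<le> real N" using aN an by (metis le_add1 of_nat_le_iff of_nat_mult order.trans)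
      then have "real mm * real q * \<eta> \<le> real N * \<eta>" using eta0 by (rule mult_right_mono)
      also have "\<dots> \<le> real q / 2^J" by (rule chain)
      finally have h: "real mm * real q * \<eta> \<le> real q / 2^J" .
      have "real mm * \<eta> = (real mm * real q * \<eta>) / real q" using q by simp
      also have "\<dots> \<le> (real q / 2^J) / real q" using h q by (intro divide_right_mono) auto
      also have "\<dots> = 1 / 2^J" using q by simp
      finally have "real mm * \<eta> \<le> 1 / 2^J" .
      moreover have "\<bar>z i\<bar> \<le> real mm * \<eta>" unfolding z_def abs_mult abs_of_nat using e
        by (intro mult_left_mono) auto
      ultimately show ?thesis by linarith
    qed
    have A: "(\<lambda>i. \<lfloor>2^J * xs n $ i\<rfloor>) \<in> box r"
      unfolding box_def
    proof (rule PiE_I)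
      fix i :: 'd
      have "\<exists>u\<in>{0,1,2::int}. \<exists>v\<in>{-1,0,1::int}.
           \<lfloor>of_int PP * frac (frac (real r * x$i) + z i)\<rfloor> = \<lfloor>of_int PP * frac (real r * x$i)\<rfloor> - 1 + u - PP * v"
        by (rule idx_box) (use zb[of i] in \<open>auto simp: PP_def frac_lt_1\<close>)
      then obtain u v where uv: "u \<in> {0,1,2::int}" "v \<in> {-1,0,1::int}"
        "\<lfloor>of_int PP * frac (frac (real r * x$i) + z i)\<rfloor> = \<lfloor>of_int PP * frac (real r * x$i)\<rfloor> - 1 + u - PP * v"
        by blast
      have P2: "(2::real)^J = of_int PP" by (simp add: PP_def)
      show "\<lfloor>2^J * xs n $ i\<rfloor> \<in> (\<lambda>(u,v). \<lfloor>of_int PP * frac (real r * x$i)\<rfloor> - 1 + u - PP * v) ` ({0,1,2::int} \<times> {-1,0,1::int})"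
        unfolding xsn P2 by (rule image_eqI[where x="(u,v)"]) (use uv in auto)
    qed simp
    have B: "frac (real r * x$i - c$i + w) < s + 2*w" if g1: "g \<ge> 1" for i
    proof -
      have "(2::real)^1 \<le> 2^g" using g1 by (intro power_increasing) auto
      then have "s \<le> 1/2" unfolding s by (intro divide_left_mono) auto
      then have sw: "s + 2*w \<le> 1" "w \<ge> 0" unfolding w using s by auto
      have "(2::real)^(g+2) \<le> 2^J" using J by (intro power_increasing) auto
      then have "1 / (2::real)^J \<le> 1 / 2^(g+2)" by (intro divide_left_mono) auto
      then have zw: "\<bar>z i\<bar> \<le> w" using zb[of i] unfolding w s by (simp add: power_add)
      have "xs n \<in> dyadic_cube (int g) k0" using n L by simp
      then have "of_int (k0 i) \<le> 2^g * xs n $ i" "2^g * xs n $ i < of_int (k0 i) + 1"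
        unfolding cube_mem by auto
      then have inn: "c$i \<le> xs n $ i" "xs n $ i < c$i + s" unfolding c s
        by (simp_all add: field_simps)
      have "frac (frac (real r * x$i) - c$i + w) < s + 2*w"
        by (rule U_cond[OF frac_ge_0 frac_lt_1 zw]) (use inn sw in \<open>auto simp: xsn\<close>)
      moreover have "frac (frac (real r * x$i) - c$i + w) = frac (real r * x$i - c$i + w)"
        using frac_frac_add[of "real r * x$i" "- c$i + w"] by (simp add: algebra_simps)
      ultimately show ?thesis by simp
    qed
    show ?thesis using A B unfolding r_def by blast
  qed
  have genL: "generation L = int g" unfolding L by (rule generation_cube)
  have sub: "M \<subseteq> (\<lambda>k. dyadic_cube (int J) k) ` Kset"
  proof
    fix L' assume "L' \<in> M"
    then have L'd: "is_dyadic_cube L'" and L'L: "L' \<subseteq> L" and gL': "generation L' = generation L + int (J - g)"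
      and "\<exists>n. 1 \<le> n \<and> real n \<le> 2 powi (int CARD('d) * generation L') \<and> xs n \<in> L'"
      unfolding M_def dyadicM_def by auto
    then obtain n where n: "1 \<le> n" "real n \<le> 2 powi (int CARD('d) * generation L')" "xs n \<in> L'" by blast
    obtain j'' k'' where L': "L' = dyadic_cube j'' k''" using L'd unfolding is_dyadic_cube_def by blast
    have j'': "j'' = int J" using gL' J unfolding L' generation_cube genL by simp
    have "int CARD('d) * generation L' = int (d * J)" unfolding L' generation_cube j'' d_def by simp
    then have n2: "real n \<le> 2^(d*J)" using n(2) by (simp del: of_nat_mult)
    have k'': "k'' = (\<lambda>i. \<lfloor>2^J * xs n $ i\<rfloor>)" using cube_idx[of "xs n" j'' k''] n(3) unfolding L' j'' by simp
    have xL: "xs n \<in> L" using n(3) L'L by blast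
    have "k'' \<in> box (a n mod q)" using key[OF n(1) n2 xL] k'' by simp
    moreover have "a n mod q \<in> Rset" unfolding Rset_def using n(1) n2 xL q by auto
    ultimately have "k'' \<in> Kset" unfolding Kset_def by blast
    then show "L' \<in> (\<lambda>k. dyadic_cube (int J) k) ` Kset" unfolding L' j'' by blast
  qed
  have finR: "finite Rset" unfolding Rset_def by (rule finite_subset[of _ "{..<q}"]) auto
  have cardbox: "card (box r) \<le> 9^d" for r
  proof -
    have "card (box r) = (\<Prod>i\<in>UNIV. card ((\<lambda>(u,v). \<lfloor>of_int PP * frac (real r * x$i)\<rfloor> - 1 + u - PP * v) ` ({0,1,2::int} \<times> {-1,0,1::int})))"
      unfolding box_def by (simp add: card_PiE)
    also have "\<dots> \<le> (\<Prod>i\<in>(UNIV::'d set). 9)"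
    proof (rule prod_mono)
      fix i :: 'd
      have "card ((\<lambda>(u,v). \<lfloor>of_int PP * frac (real r * x$i)\<rfloor> - 1 + u - PP * v) ` ({0,1,2::int} \<times> {-1,0,1::int}))
             \<le> card ({0,1,2::int} \<times> {-1,0,1::int})" by (rule card_image_le) simp
      also have "\<dots> = 9" by (simp add: card_cartesian_product)
      finally show "0 \<le> card ((\<lambda>(u,v). \<lfloor>of_int PP * frac (real r * x$i)\<rfloor> - 1 + u - PP * v) ` ({0,1,2::int} \<times> {-1,0,1::int})) \<and>
            card ((\<lambda>(u,v). \<lfloor>of_int PP * frac (real r * x$i)\<rfloor> - 1 + u - PP * v) ` ({0,1,2::int} \<times> {-1,0,1::int})) \<le> 9" by simp
    qed
    also have "\<dots> = 9^d" unfolding d_def by simp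
    finally show ?thesis .
  qed
  have finbox: "finite (box r)" for r unfolding box_def by (intro finite_PiE) auto
  have finK: "finite Kset" unfolding Kset_def using finR finbox by blast
  have "card M \<le> card ((\<lambda>k. dyadic_cube (int J) k) ` Kset)" using sub finK by (intro card_mono) auto
  also have "\<dots> \<le> card Kset" by (rule card_image_le[OF finK])
  also have "\<dots> \<le> (\<Sum>r\<in>Rset. card (box r))" unfolding Kset_def by (rule card_UN_le[OF finR])
  also have "\<dots> \<le> (\<Sum>r\<in>Rset. 9^d)" by (rule sum_mono) (rule cardbox)
  also have "\<dots> = card Rset * 9^d" by simp
  finally have "real (card M) \<le> real (card Rset * 9^d)" by (simp only: of_nat_le_iff)
  then have cM: "real (card M) \<le> real (card Rset) * 9^d" by simp
  have cR: "real (card Rset) \<le> 2 * real q * 2^d / 2^(d*g)"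
  proof (cases "g = 0")
    case True
    have "card Rset \<le> card {..<q}" unfolding Rset_def by (rule card_mono) auto
    then have "real (card Rset) \<le> real q" by simp
    also have "\<dots> \<le> 2 * real q * 2^d"
    proof -
      have "(1::real) \<le> 2^d" by (rule one_le_power) simp
      then have "real q * 1 \<le> real q * (2 * 2^d)" by (intro mult_left_mono) linarith+
      then show ?thesis by (simp add: algebra_simps)
    qed
    finally show ?thesis using True by simp
  next
    case False
    then have g1: "g \<ge> 1" by simp
    define PS where "PS = {r::nat. r < q \<and> (\<forall>i. frac (real r * x$i - c$i + w) < s + 2*w)}"
    have "Rset \<subseteq> PS" unfolding Rset_def PS_def using key g1 by blast
    then have "card Rset \<le> card PS" unfolding PS_def by (intro card_mono) auto
    then have "card Rset * (2^(g-1))^d \<le> q + T" using pack[OF g1] unfolding PS_def d_def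
      by (meson le_trans mult_le_mono1)
    then have "card Rset * (2^(g-1))^d \<le> 2 * q" using Tq by linarith
    then have "real (card Rset * (2^(g-1))^d) \<le> real (2 * q)" by (simp only: of_nat_le_iff)
    then have "real (card Rset) * ((2::real)^(g-1))^d \<le> 2 * real q" by simp
    moreover have "((2::real)^(g-1))^d * 2^d = 2^(d*g)"
    proof -
      have "((2::real)^(g-1))^d * 2^d = (2^(g-1) * 2)^d" by (simp add: power_mult_distrib)
      also have "2^(g-1) * 2 = (2::real)^g" using g1 by (cases g) auto
      finally show ?thesis by (simp add: power_mult[symmetric] mult.commute)
    qed
    ultimately have A: "real (card Rset) * ((2::real)^(g-1))^d \<le> 2 * real q"
      and B: "((2::real)^(g-1))^d * 2^d = 2^(d*g)" by blast+
    have Xpos: "((2::real)^(g-1))^d > 0" by simp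
    have "2 * real q * 2^d / 2^(d*g) = 2 * real q / ((2::real)^(g-1))^d"
      unfolding B[symmetric] by simp
    then show ?thesis using A Xpos by (simp add: pos_le_divide_eq)
  qed
  have "real (card Rset) * 9^d \<le> (2 * real q * 2^d / 2^(d*g)) * 9^d" using cR
    by (rule mult_right_mono) simp
  also have "\<dots> = 2 * 9^d * real q * 2^d / 2^(d*g)" by simp
  finally have "real (card M) \<le> 2 * 9^d * real q * 2^d / 2^(d*g)" using cM by linarith
  then show ?thesis unfolding M_def xs_def d_def .
qed



lemma liminf_le_freq:
  fixes f :: "nat \<Rightarrow> ereal"
  assumes "\<forall>j0. \<exists>j\<ge>j0. f j \<le> B"
  shows "Liminf sequentially f \<le> B"
  unfolding liminf_SUP_INF
proof (rule SUP_least)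
  fix n :: nat
  obtain j where "j \<ge> n" "f j \<le> B" using assms by blast
  then show "(INF m\<in>{n..}. f m) \<le> B" by (meson INF_lower2 atLeast_iff)
qed

lemma freq_of_liminf:
  fixes f :: "nat \<Rightarrow> ereal"
  assumes "Liminf sequentially f < B"
  shows "\<forall>Q. \<exists>q\<ge>Q. f q < B"
proof
  fix Q :: nat
  have "(INF m\<in>{Q..}. f m) \<le> (SUP n. INF m\<in>{n..}. f m)" by (rule SUP_upper) simp
  then have "(INF m\<in>{Q..}. f m) < B" using assms unfolding liminf_SUP_INF by simp
  then show "\<exists>q\<ge>Q. f q < B" unfolding INF_less_iff by auto
qed

lemma supnorm_ge: "\<bar>z$i\<bar> \<le> supnorm z"
  unfolding supnorm_def by (rule Max_ge) auto

lemma lattice_nonneg: "lattice_dist z \<ge> 0"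
  unfolding lattice_dist_def
proof (rule cInf_greatest)
  show "{supnorm (z - p) |p. \<forall>i. p $ i \<in> \<int>} \<noteq> {}"
  proof -
    have "\<forall>i. (0::real^'a)$i \<in> \<int>" by simp
    then have "supnorm (z - 0) \<in> {supnorm (z - p) |p. \<forall>i. p $ i \<in> \<int>}" by blast
    then show ?thesis by blast
  qed
  fix s assume "s \<in> {supnorm (z - p) |p. \<forall>i. p $ i \<in> \<int>}"
  then obtain p where "s = supnorm (z - p)" by blast
  then show "0 \<le> s" using supnorm_ge[of "z - p" undefined] by linarith
qed

lemma lattice_approx:
  assumes "lattice_dist z < \<eta>"
  shows "\<exists>p. (\<forall>i. p$i \<in> \<int>) \<and> (\<forall>i. \<bar>z$i - p$i\<bar> < \<eta>)"
proof -
  have ne: "{supnorm (z - p) |p. \<forall>i. p $ i \<in> \<int>} \<noteq> {}"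
  proof -
    have "\<forall>i. (0::real^'a)$i \<in> \<int>" by simp
    then have "supnorm (z - 0) \<in> {supnorm (z - p) |p. \<forall>i. p $ i \<in> \<int>}" by blast
    then show ?thesis by blast
  qed
  obtain s where "s \<in> {supnorm (z - p) |p. \<forall>i. p $ i \<in> \<int>}" "s < \<eta>"
    using cInf_lessD[OF ne] assms unfolding lattice_dist_def by blast
  then obtain p where p: "\<forall>i. p$i \<in> \<int>" "supnorm (z - p) < \<eta>" by blast
  have "\<bar>z$i - p$i\<bar> < \<eta>" for i using supnorm_ge[of "z - p" i] p(2) by simp
  then show ?thesis using p(1) by blast
qed

lemma a_ge:
  fixes a :: "nat \<Rightarrow> nat"
  assumes a_pos: "\<forall>n\<ge>1. a n > 0"
    and a_incr: "\<forall>m n. 1 \<le> m \<longrightarrow> m < n \<longrightarrow> a m < a n"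
  shows "n \<ge> 1 \<Longrightarrow> a n \<ge> n"
proof (induction n)
  case 0 then show ?case by simp
next
  case (Suc n)
  show ?case
  proof (cases "n = 0")
    case True then show ?thesis using a_pos by auto
  next
    case False
    then have "a n \<ge> n" using Suc by simp
    moreover have "a n < a (Suc n)" using a_incr False by simp
    ultimately show ?thesis by simp
  qed
qed

lemma exJ:
  fixes X :: real
  assumes "X \<ge> 1"
  shows "\<exists>J::nat. 2^J \<le> X \<and> X < 2^(J+1)"
proof -
  obtain n where n: "X < 2^n" using real_arch_pow[of 2 X] by auto
  define J where "J = (LEAST J. X < (2::real)^(J+1))"
  have "(2::real)^n \<le> 2^(n+1)" by (rule power_increasing) auto
  then have n1: "X < 2^((n::nat)+1)" using n by linarith
  have J: "X < 2^(J+1)" unfolding J_def by (rule LeastI[of _ n]) (rule n1)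
  have "2^J \<le> X"
  proof (cases J)
    case 0 then show ?thesis using assms by simp
  next
    case (Suc k)
    then have "\<not> X < 2^(k+1)" using not_less_Least[of k "\<lambda>J. X < (2::real)^(J+1)"] unfolding J_def by simp
    then show ?thesis using Suc by simp
  qed
  then show ?thesis using J by blast
qed



lemma main_freq:
  fixes a :: "nat \<Rightarrow> nat" and x :: "real^'d" and L :: "(real^'d) set" and \<kappa>' \<delta>' :: real
  assumes a_pos: "\<forall>n\<ge>1. a n > 0"
    and a_incr: "\<forall>m n. 1 \<le> m \<longrightarrow> m < n \<longrightarrow> a m < a n"
    and indep: "\<forall>(c0::rat) (c::'d \<Rightarrow> rat).
                  of_rat c0 + (\<Sum>i\<in>UNIV. of_rat (c i) * x $ i) = 0 \<longrightarrow> c0 = 0 \<and> (\<forall>i. c i = 0)"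
    and L_dyadic: "is_dyadic_cube L"
    and L_sub: "L \<subseteq> {y. \<forall>i. 0 \<le> y $ i \<and> y $ i < 1}"
    and kp: "\<kappa>' > 0" and dp: "\<delta>' > 0"
    and freq: "\<forall>Q. \<exists>q\<ge>Q. real q powr (1 / real CARD('d)) * lattice_dist (real q *\<^sub>R x) < \<kappa>'"
    and ev: "\<exists>N0. \<forall>N\<ge>N0. \<delta>' < real (card {n. 1 \<le> n \<and> a n \<le> N}) / real N"
  shows "\<forall>j0. \<exists>j\<ge>j0. 2 powr (- real CARD('d) * real j) *
              real (card (dyadicM (\<lambda>n. frac_vec (real (a n) *\<^sub>R x)) L j))
          \<le> 2 * 36^CARD('d) * (2*\<kappa>'/\<delta>') powr (real CARD('d) / (real CARD('d) + 1))"
proof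
  fix j0 :: nat
  define d where "d = CARD('d)"
  have d1: "d \<ge> 1" unfolding d_def by (simp add: Suc_leI)
  obtain g0 k0 where L: "L = dyadic_cube g0 k0" using L_dyadic unfolding is_dyadic_cube_def by blast
  have "g0 \<ge> 0" using gen_nonneg L_sub unfolding L by blast
  then obtain g :: nat where g: "g0 = int g" by (metis nonneg_eq_int)
  obtain N0 where N0: "\<And>N. N \<ge> N0 \<Longrightarrow> \<delta>' < real (card {n. 1 \<le> n \<and> a n \<le> N}) / real N" using ev by blast
  have cardS: "card {n. 1 \<le> n \<and> a n \<le> N} \<le> N" for N
  proof -
    have "{n. 1 \<le> n \<and> a n \<le> N} \<subseteq> {1..N}" using a_ge[OF a_pos a_incr] by force
    then show ?thesis by (metis card_atLeastAtMost card_mono finite_atLeastAtMost diff_Suc_1)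
  qed
  have d'1: "\<delta>' < 1"
  proof -
    have "\<delta>' < real (card {n. 1 \<le> n \<and> a n \<le> max N0 1}) / real (max N0 1)" using N0 by simp
    also have "\<dots> \<le> 1" using cardS[of "max N0 1"] by (simp add: divide_le_eq_1)
    finally show ?thesis .
  qed
  define s :: real where "s = 1 / 2^g"
  define w where "w = s / 4"
  define c :: "real^'d" where "c = (\<chi> i. of_int (k0 i) / 2^g)"
  obtain T :: nat where T: "g \<ge> 1 \<Longrightarrow> \<forall>q. card {r::nat. r < q \<and> (\<forall>i. frac (real r * x$i - c$i + w) < s + 2*w)}
            * (2^(g-1))^CARD('d) \<le> q + T"
  proof (cases "g \<ge> 1")
    case True
    then show ?thesis using packing[OF indep True s_def w_def, of c] that by blast
  next
    case False then show ?thesis using that by blast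
  qed
  define \<gamma> where "\<gamma> = real d / (real d + 1)"
  define \<beta> where "\<beta> = (\<delta>' / (2*\<kappa>')) powr (1 / (real d + 1))"
  have \<beta>pos: "\<beta> > 0" unfolding \<beta>_def using kp dp by simp
  define J0 where "J0 = g + 2 + j0 + N0"
  define Q where "Q = max (T + 1) (nat \<lceil>(2^J0 / \<beta>)^d\<rceil>)"
  obtain q where qQ: "q \<ge> Q" and qk: "real q powr (1 / real d) * lattice_dist (real q *\<^sub>R x) < \<kappa>'"
    using freq unfolding d_def by blast
  have q0: "q > 0" and Tq: "T \<le> q" using qQ unfolding Q_def by auto
  define \<nu> where "\<nu> = real q powr (1 / real d)"
  have \<nu>pos: "\<nu> > 0" unfolding \<nu>_def using q0 by simp
  have \<nu>d: "\<nu> ^ d = real q"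
  proof -
    have "\<nu> ^ d = \<nu> powr real d" using \<nu>pos by (simp add: powr_realpow)
    also have "\<dots> = real q" unfolding \<nu>_def powr_powr using d1 by simp
    finally show ?thesis .
  qed
  have "lattice_dist (real q *\<^sub>R x) < \<kappa>' / \<nu>" using qk \<nu>pos unfolding \<nu>_def[symmetric] by (simp add: field_simps)
  then obtain p where p: "\<forall>i. p$i \<in> \<int>" and pe: "\<forall>i. \<bar>real q * x$i - p$i\<bar> < \<kappa>' / \<nu>"
    using lattice_approx by fastforce
  define \<eta> where "\<eta> = \<kappa>' / \<nu>"
  have X1: "\<beta> * \<nu> \<ge> 2^J0"
  proof -
    have "real q \<ge> (2^J0 / \<beta>)^d" using qQ unfolding Q_def by linarith
    then have "real q powr (1/real d) \<ge> ((2^J0 / \<beta>)^d) powr (1/real d)" using \<beta>pos by (intro powr_mono2) auto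
    moreover have "((2^J0 / \<beta>)^d) powr (1/real d) = 2^J0 / \<beta>"
      using \<beta>pos d1 by (simp add: powr_realpow[symmetric] powr_powr)
    ultimately have "\<nu> \<ge> 2^J0 / \<beta>" unfolding \<nu>_def by simp
    then show ?thesis using \<beta>pos by (simp add: field_simps)
  qed
  then have "\<beta> * \<nu> \<ge> 1" by (meson one_le_power order_trans one_le_numeral)
  then obtain J :: nat where J: "2^J \<le> \<beta> * \<nu>" "\<beta> * \<nu> < 2^(J+1)" using exJ by blast
  have JJ0: "J \<ge> J0"
  proof -
    have "(2::real)^J0 < 2^(J+1)" using X1 J by linarith
    then have "J0 < J + 1" by (metis power_strict_increasing_iff one_less_numeral_iff semiring_norm(76))
    then show ?thesis by simp
  qed
  define N :: nat where "N = nat \<lceil>2^(d*J) / \<delta>'\<rceil>"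
  have NJ: "real N \<ge> 2^(d*J) / \<delta>'" unfolding N_def by linarith
  have NJ2: "real N \<le> 2 * 2^(d*J) / \<delta>'"
  proof -
    have "(1::real) \<le> 2^(d*J)" by simp
    then have "\<delta>' \<le> 2^(d*J)" using d'1 by linarith
    then have "1 \<le> 2^(d*J) / \<delta>'" using dp by (simp add: le_divide_eq)
    moreover have "real N \<le> 2^(d*J) / \<delta>' + 1"
    proof -
      have y0: "0 \<le> 2^(d*J) / \<delta>'" using dp by simp
      then have "real N = of_int \<lceil>2^(d*J) / \<delta>'\<rceil>" unfolding N_def by simp
      then show ?thesis using ceiling_correct[of "2^(d*J) / \<delta>'"] by linarith
    qed
    ultimately show ?thesis by simp
  qed
  have dJ: "(2::real)^(d*J) \<ge> 2^J" using d1 by (intro power_increasing) auto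
  have NN0: "N \<ge> N0"
  proof -
    have "J < 2^J" by (rule less_exp)
    then have "real J < real (2^J)" by (simp only: of_nat_less_iff)
    then have "real J < 2^J" by simp
    moreover have "2^(d*J) \<le> real N"
    proof -
      have "2^(d*J) * \<delta>' \<le> 2^(d*J)" using d'1 dp by (intro mult_left_le) auto
      then have "2^(d*J) \<le> 2^(d*J) / \<delta>'" using dp by (simp add: le_divide_eq)
      then show ?thesis using NJ by linarith
    qed
    ultimately show ?thesis using JJ0 dJ unfolding J0_def by linarith
  qed
  have idx: "\<forall>n. 1 \<le> n \<and> real n \<le> 2^(CARD('d)*J) \<longrightarrow> a n \<le> N"
  proof (intro allI impI)
    fix n assume n: "1 \<le> n \<and> real n \<le> 2^(CARD('d)*J)"
    show "a n \<le> N"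
    proof (rule ccontr)
      assume "\<not> a n \<le> N"
      then have an: "a n > N" by simp
      have "{m. 1 \<le> m \<and> a m \<le> N} \<subseteq> {1..<n}"
      proof
        fix m assume m: "m \<in> {m. 1 \<le> m \<and> a m \<le> N}"
        have "m < n"
        proof (rule ccontr)
          assume "\<not> m < n"
          then have "m = n \<or> n < m" by auto
          then have "a m \<ge> a n" using a_incr n by (metis less_imp_le order_refl)
          then show False using m an by simp
        qed
        then show "m \<in> {1..<n}" using m by simp
      qed
      then have "card {m. 1 \<le> m \<and> a m \<le> N} \<le> n - 1" by (metis card_atLeastLessThan card_mono finite_atLeastLessThan)
      then have c1: "real (card {m. 1 \<le> m \<and> a m \<le> N}) < real n" using n by linarith
      have "N > 0"
      proof -
        have "real N \<ge> 2^(d*J) / \<delta>'" by (rule NJ)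
        moreover have "2^(d*J) / \<delta>' > 0" using dp by simp
        ultimately show ?thesis by linarith
      qed
      have "\<delta>' < real (card {m. 1 \<le> m \<and> a m \<le> N}) / real N" using N0 NN0 by blast
      then have "\<delta>' * real N < real (card {m. 1 \<le> m \<and> a m \<le> N})" using \<open>N > 0\<close> by (simp add: field_simps)
      moreover have "\<delta>' * real N \<ge> 2^(d*J)" using NJ dp by (simp add: field_simps)
      ultimately show False using c1 n unfolding d_def by linarith
    qed
  qed
  have chain: "real N * \<eta> \<le> real q / 2^J"
  proof -
    have b: "\<beta> ^ (d+1) = \<delta>' / (2*\<kappa>')"
    proof -
      have "\<beta> ^ (d+1) = \<beta> powr real (d+1)" by (rule powr_realpow[OF \<beta>pos, symmetric])
      also have "\<dots> = (\<delta>' / (2*\<kappa>')) powr 1" unfolding \<beta>_def powr_powr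
        by (rule arg_cong[where f="\<lambda>t. (\<delta>' / (2*\<kappa>')) powr t"]) simp
      also have "\<dots> = \<delta>' / (2*\<kappa>')" using kp dp by simp
      finally show ?thesis .
    qed
    have "(2^J)^(d+1) \<le> (\<beta> * \<nu>)^(d+1)" using J(1) by (intro power_mono) auto
    then have "(2::real)^(J*(d+1)) \<le> \<beta>^(d+1) * \<nu>^(d+1)" by (simp only: power_mult power_mult_distrib)
    then have "2^(J*(d+1)) \<le> \<delta>' / (2*\<kappa>') * \<nu>^(d+1)" unfolding b .
    then have key: "2*\<kappa>' * 2^(J*(d+1)) \<le> \<delta>' * \<nu>^(d+1)" using kp by (simp add: field_simps)
    have "real N * \<eta> \<le> (2 * 2^(d*J) / \<delta>') * \<eta>" using NJ2 kp \<nu>pos unfolding \<eta>_def by (intro mult_right_mono) auto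
    also have "\<dots> = (2*\<kappa>' * 2^(J*(d+1))) / (\<delta>' * \<nu> * 2^J)"
      unfolding \<eta>_def using dp \<nu>pos by (simp add: field_simps power_add power_mult mult.commute)
    also have "\<dots> \<le> (\<delta>' * \<nu>^(d+1)) / (\<delta>' * \<nu> * 2^J)" using key dp \<nu>pos by (intro divide_right_mono) auto
    also have "\<dots> = \<nu>^d / 2^J" using dp \<nu>pos by (simp add: field_simps)
    finally show ?thesis unfolding \<nu>d .
  qed
  have Tspec: "g \<ge> 1 \<Longrightarrow> card {r::nat. r < q \<and> (\<forall>i. frac (real r * x$i - c$i + w) < s + 2*w)}
            * (2^(g-1))^CARD('d) \<le> q + T" using T by blast
  have JG: "J \<ge> g + 2" using JJ0 unfolding J0_def by simp
  have cnt: "real (card (dyadicM (\<lambda>n. frac_vec (real (a n) *\<^sub>R x)) L (J - g)))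
           \<le> 2 * 9^CARD('d) * real q * 2^CARD('d) / 2^(CARD('d)*g)"
    by (rule main_count[OF Tspec Tq s_def w_def _ _ p _ q0 JG chain idx])
       (auto simp: c_def L g \<eta>_def less_imp_le pe)
  have qb: "real q < 2^(d*J) * 2^d / \<beta>^d"
  proof -
    have "\<nu> < 2^(J+1) / \<beta>" using J(2) \<beta>pos by (simp add: field_simps)
    then have "\<nu>^d < (2^(J+1) / \<beta>)^d" using \<nu>pos d1 by (intro power_strict_mono) auto
    then show ?thesis unfolding \<nu>d by (simp add: power_divide power_add power_mult mult.commute power_mult_distrib)
  qed
  have bd: "1 / \<beta>^d = (2*\<kappa>'/\<delta>') powr (real d / (real d + 1))"
  proof -
    have "\<beta>^d = \<beta> powr real d" by (rule powr_realpow[OF \<beta>pos, symmetric])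
    also have "\<dots> = (\<delta>' / (2*\<kappa>')) powr (real d / (real d + 1))" unfolding \<beta>_def powr_powr by simp
    finally show ?thesis using kp dp by (simp add: powr_divide)
  qed
  show "\<exists>j\<ge>j0. 2 powr (- real CARD('d) * real j) *
              real (card (dyadicM (\<lambda>n. frac_vec (real (a n) *\<^sub>R x)) L j))
          \<le> 2 * 36^CARD('d) * (2*\<kappa>'/\<delta>') powr (real CARD('d) / (real CARD('d) + 1))"
  proof (intro exI conjI)
    show "J - g \<ge> j0" using JJ0 unfolding J0_def by simp
    have pw: "2 powr (- real d * real (J - g)) = 2^(d*g) / 2^(d*J)"
    proof -
      have "2 powr (- real d * real (J - g)) = 1 / 2^(d*(J-g))"
        by (simp add: powr_minus_divide powr_realpow[symmetric])
      moreover have "(2::real)^(d*J) = 2^(d*(J-g)) * 2^(d*g)" using JG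
        by (simp add: power_add[symmetric] add_mult_distrib2[symmetric])
      ultimately show ?thesis by simp
    qed
    have "2 powr (- real d * real (J - g)) * real (card (dyadicM (\<lambda>n. frac_vec (real (a n) *\<^sub>R x)) L (J - g)))
         \<le> 2^(d*g) / 2^(d*J) * (2 * 9^d * real q * 2^d / 2^(d*g))"
      unfolding pw using cnt unfolding d_def by (intro mult_left_mono) auto
    also have "\<dots> = 2 * 9^d * 2^d * real q / 2^(d*J)" by simp
    also have "\<dots> \<le> 2 * 9^d * 2^d * (2^(d*J) * 2^d / \<beta>^d) / 2^(d*J)"
      using qb by (intro divide_right_mono mult_left_mono) auto
    also have "\<dots> = 2 * 36^d * (1 / \<beta>^d)"
    proof -
      have "(36::real)^d = 9^d * 2^d * 2^d" by (simp add: power_mult_distrib[symmetric])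
      then show ?thesis by (simp add: field_simps)
    qed
    finally show "2 powr (- real CARD('d) * real (J - g)) * real (card (dyadicM (\<lambda>n. frac_vec (real (a n) *\<^sub>R x)) L (J - g)))
          \<le> 2 * 36^CARD('d) * (2*\<kappa>'/\<delta>') powr (real CARD('d) / (real CARD('d) + 1))"
      using bd unfolding d_def by (simp only:)
  qed
qed



lemma const_480: "(d::nat) \<ge> 1 \<Longrightarrow> 9 * (36::real)^d \<le> 480^d"
proof (cases d)
  case (Suc k)
  have "(36::real)^k \<le> 480^k" by (rule power_mono) auto
  then have "324 * (36::real)^k \<le> 480 * 480^k" by (intro mult_mono) auto
  then show ?thesis using Suc by simp
qed simp

theorem proposition11p4:
  fixes a :: "nat \<Rightarrow> nat" and x :: "real^'d" and \<delta> :: real and L :: "(real^'d) set"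
  assumes a_pos: "\<forall>n\<ge>1. a n > 0"
    and a_incr: "\<forall>m n. 1 \<le> m \<longrightarrow> m < n \<longrightarrow> a m < a n"
    and dens: "Liminf sequentially
                 (\<lambda>N::nat. ereal (real (card {n. 1 \<le> n \<and> a n \<le> N}) / real N)) = ereal \<delta>"
    and dens_pos: "\<delta> > 0"
    and indep: "\<forall>(c0::rat) (c::'d \<Rightarrow> rat).
                  of_rat c0 + (\<Sum>i\<in>UNIV. of_rat (c i) * x $ i) = 0 \<longrightarrow> c0 = 0 \<and> (\<forall>i. c i = 0)"
    and L_dyadic: "is_dyadic_cube L"
    and L_ne: "L \<noteq> {}"
    and L_sub: "L \<subseteq> {y. \<forall>i. 0 \<le> y $ i \<and> y $ i < 1}"
  shows "Liminf sequentially
           (\<lambda>j::nat. ereal (2 powr (- real CARD('d) * real j) *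
              real (card (dyadicM (\<lambda>n. frac_vec (real (a n) *\<^sub>R x)) L j))))
         \<le> (if kappa x = \<infinity> then \<infinity>
            else ereal (480 ^ CARD('d) *
                   (real_of_ereal (kappa x) / \<delta>) powr (real CARD('d) / (real CARD('d) + 1))))"
proof -
  define d where "d = CARD('d)"
  have d1: "d \<ge> 1" unfolding d_def by (simp add: Suc_leI)
  define \<gamma> where "\<gamma> = real d / (real d + 1)"
  have \<gamma>: "0 < \<gamma>" "\<gamma> \<le> 1" unfolding \<gamma>_def using d1 by auto
  define f where "f = (\<lambda>j::nat. ereal (2 powr (- real CARD('d) * real j) *
              real (card (dyadicM (\<lambda>n. frac_vec (real (a n) *\<^sub>R x)) L j))))"
  have ev: "\<exists>N0. \<forall>N\<ge>N0. \<delta>' < real (card {n. 1 \<le> n \<and> a n \<le> N}) / real N" if "\<delta>' < \<delta>" for \<delta>'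
  proof -
    have "ereal \<delta>' < Liminf sequentially
                 (\<lambda>N::nat. ereal (real (card {n. 1 \<le> n \<and> a n \<le> N}) / real N))" using dens that by simp
    from less_LiminfD[OF this] show ?thesis unfolding eventually_sequentially by auto
  qed
  have freq: "\<forall>Q. \<exists>q\<ge>Q. real q powr (1 / real CARD('d)) * lattice_dist (real q *\<^sub>R x) < \<kappa>'"
    if "kappa x < ereal \<kappa>'" for \<kappa>'
  proof -
    have "\<forall>Q. \<exists>q\<ge>Q. ereal (real q powr (1 / real CARD('d)) * lattice_dist (real q *\<^sub>R x)) < ereal \<kappa>'"
      by (rule freq_of_liminf) (use that in \<open>simp add: kappa_def\<close>)
    then show ?thesis by simp
  qed
  have MF: "Liminf sequentially f \<le> ereal (2 * 36^d * (2*\<kappa>'/\<delta>') powr \<gamma>)"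
    if "kappa x < ereal \<kappa>'" "\<kappa>' > 0" "0 < \<delta>'" "\<delta>' < \<delta>" for \<kappa>' \<delta>'
  proof (rule liminf_le_freq)
    have "\<forall>j0. \<exists>j\<ge>j0. 2 powr (- real CARD('d) * real j) *
              real (card (dyadicM (\<lambda>n. frac_vec (real (a n) *\<^sub>R x)) L j))
          \<le> 2 * 36^CARD('d) * (2*\<kappa>'/\<delta>') powr (real CARD('d) / (real CARD('d) + 1))"
      by (rule main_freq[OF a_pos a_incr indep L_dyadic L_sub that(2) that(3) freq[OF that(1)] ev[OF that(4)]])
    then show "\<forall>j0. \<exists>j\<ge>j0. f j \<le> ereal (2 * 36^d * (2*\<kappa>'/\<delta>') powr \<gamma>)"
      unfolding f_def d_def \<gamma>_def by simp
  qed
  have k0: "kappa x \<ge> 0"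
    unfolding kappa_def
  proof (rule Liminf_bounded, rule always_eventually, rule allI)
    fix q :: nat
    have "0 \<le> real q powr (1 / real CARD('d)) * lattice_dist (real q *\<^sub>R x)"
      by (intro mult_nonneg_nonneg) (auto simp: lattice_nonneg)
    then show "0 \<le> ereal (real q powr (1 / real CARD('d)) * lattice_dist (real q *\<^sub>R x))" by simp
  qed
  show ?thesis
  proof (cases "kappa x")
    case PInf then show ?thesis by simp
  next
    case MInf then show ?thesis using k0 by simp
  next
    case (real \<kappa>)
    have \<kappa>0: "\<kappa> \<ge> 0" using k0 real by simp
    have rhs: "(if kappa x = \<infinity> then \<infinity>
            else ereal (480 ^ CARD('d) *
                   (real_of_ereal (kappa x) / \<delta>) powr (real CARD('d) / (real CARD('d) + 1))))
            = ereal (480^d * (\<kappa>/\<delta>) powr \<gamma>)" using real unfolding d_def \<gamma>_def by simp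
    show ?thesis unfolding rhs f_def[symmetric]
    proof (cases "\<kappa> > 0")
      case True
      have "Liminf sequentially f \<le> ereal (2 * 36^d * (2*(3*\<kappa>/2)/(2*\<delta>/3)) powr \<gamma>)"
        by (rule MF) (use True dens_pos real in auto)
      also have "2 * 36^d * (2*(3*\<kappa>/2)/(2*\<delta>/3)) powr \<gamma> \<le> 480^d * (\<kappa>/\<delta>) powr \<gamma>"
      proof -
        have eq: "2*(3*\<kappa>/2)/(2*\<delta>/3) = (9/2) * (\<kappa>/\<delta>)" using dens_pos by (simp add: field_simps)
        have A: "(2*(3*\<kappa>/2)/(2*\<delta>/3)) powr \<gamma> = (9/2) powr \<gamma> * (\<kappa>/\<delta>) powr \<gamma>"
          unfolding eq by (rule powr_mult)
        have "(9/2::real) powr \<gamma> \<le> (9/2) powr 1" using \<gamma> by (intro powr_mono) auto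
        then have B: "(9/2::real) powr \<gamma> \<le> 9/2" by simp
        have C: "(9/2::real) powr \<gamma> * (\<kappa>/\<delta>) powr \<gamma> \<le> 9/2 * (\<kappa>/\<delta>) powr \<gamma>"
          by (rule mult_right_mono[OF B]) simp
        have "(2*(3*\<kappa>/2)/(2*\<delta>/3)) powr \<gamma> \<le> 9/2 * (\<kappa>/\<delta>) powr \<gamma>"
          using A C by linarith
        then have "2 * 36^d * (2*(3*\<kappa>/2)/(2*\<delta>/3)) powr \<gamma> \<le> 2 * 36^d * (9/2 * (\<kappa>/\<delta>) powr \<gamma>)"
          by (intro mult_left_mono) auto
        also have "\<dots> = (9 * 36^d) * (\<kappa>/\<delta>) powr \<gamma>" by simp
        also have "\<dots> \<le> 480^d * (\<kappa>/\<delta>) powr \<gamma>" using const_480[OF d1] by (intro mult_right_mono) auto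
        finally show ?thesis .
      qed
      finally show "Liminf sequentially f \<le> ereal (480^d * (\<kappa>/\<delta>) powr \<gamma>)" by simp
    next
      case False
      then have \<kappa>00: "\<kappa> = 0" using \<kappa>0 by simp
      have "Liminf sequentially f \<le> ereal 0 + ereal \<epsilon>" if "\<epsilon> > 0" for \<epsilon>
      proof -
        define Z where "Z = (\<epsilon> / (2 * 36^d)) powr (1/\<gamma>)"
        have Zpos: "Z > 0" unfolding Z_def using that by simp
        define \<kappa>' where "\<kappa>' = (\<delta>/4) * Z"
        have kp: "\<kappa>' > 0" unfolding \<kappa>'_def using Zpos dens_pos by simp
        have LL: "Liminf sequentially f \<le> ereal (2 * 36^d * (2*\<kappa>'/(\<delta>/2)) powr \<gamma>)"
          by (rule MF) (use kp dens_pos real \<kappa>00 in auto)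
        have E1: "2*\<kappa>'/(\<delta>/2) = Z"
          unfolding \<kappa>'_def using dens_pos by (simp add: field_simps)
        have E2: "Z powr \<gamma> = \<epsilon> / (2 * 36^d)"
        proof -
          have "Z powr \<gamma> = (\<epsilon> / (2 * 36^d)) powr 1" unfolding Z_def powr_powr using \<gamma> by simp
          also have "\<dots> = \<epsilon> / (2 * 36^d)" using that by simp
          finally show ?thesis .
        qed
        have E3: "2 * 36^d * (\<epsilon> / (2 * 36^d)) = (\<epsilon>::real)" by simp
        have "2 * 36^d * (2*\<kappa>'/(\<delta>/2)) powr \<gamma> = \<epsilon>" unfolding E1 E2 E3 by (rule refl)
        then have "Liminf sequentially f \<le> ereal \<epsilon>" using LL by simp
        then show ?thesis by simp
      qed
      then have "Liminf sequentially f \<le> ereal 0" by (rule ereal_le_epsilon2)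
      then show "Liminf sequentially f \<le> ereal (480^d * (\<kappa>/\<delta>) powr \<gamma>)" using \<kappa>00 by simp
    qed
  qed
qed

end
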